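(* Let $G=\langle(135)(246),(14)(23)(56)\rangle\le S_6$ (dihedral of order $6$), $G'=\langle G,(12)(34)(56)\rangle$ (of order $12$, with $|G':G|=2$), and $D=\{(6),(5,1),(4,2),(4,1^2),(3^2)\}$. Then: (i) $Aut_0(T_{D;G})\cong S_3\times S_2$; (ii) $Aut_0^{G'}(T_{D;G})\cong S_2\times S_2$.
   Context: For a partition $\lambda=(\lambda_1\ge\dots\ge\lambda_k>0)$ of $6$, a tabloid of shape $\lambda$ is a sequence $A=(A_1,\dots,A_k)$ of pairwise disjoint subsets of $\{1,\dots,6\}$ with $|A_i|=\lambda_i$; $T_\lambda$ is their set. $S_6$ acts by $\zeta A=(\zeta(A_1),\dots,\zeta(A_k))$. Tabloids are partially ordered by $A\le B$ iff $A_1\cup\dots\cup A_i\subseteq B_1\cup\dots\cup B_i$ for all $i\ge1$ (missing rows empty). $T_{\lambda;G}$ is the set of $G$-orbits $O_G(A)$ in $T_\lambda$ and $T_{D;G}=\bigcup_{\mu\in D}T_{\mu;G}$, ordered by $a\le b$ iff there are $A\in a$, $B\in b$ with $A\le B$. $Aut_0(T_{D;G})$ is the group of bijections $\alpha$ of $T_{D;G}$ with $\alpha(a)\le\alpha(b)\iff a\le b$ and $\alpha(T_{\mu;G})=T_{\mu;G}$ for every $\mu\in D$. The group $G'/G$ acts on $T_{D;G}$ by $(\eta G)O_G(A)=O_G(\eta A)$, and $Aut_0^{G'}(T_{D;G})$ is the subgroup of $\alpha\in Aut_0(T_{D;G})$ with $\alpha(\iota a)=\iota\alpha(a)$ for all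 $\iota\in G'/G$ and $a\in T_{D;G}$ (equivalently, automorphisms mapping each pair of distinct $G$-orbits contained in one $G'$-orbit onto such a pair). *)

theory Defs
  imports "HOL-Algebra.Sym_Groups" "HOL-Combinatorics.Transposition"
begin

text \<open>Partitions are lists of positive naturals (weakly decreasing). A tabloid of shape
  lam is a list A of pairwise disjoint subsets of {1..6} with card (A!i) = lam!i.\<close>

type_synonym tabloid = "nat set list"

definition tabloids :: "nat list \<Rightarrow> tabloid set" where
  "tabloids lam = {A. length A = length lam
      \<and> (\<forall>i<length A. A ! i \<subseteq> {1..6} \<and> card (A ! i) = lam ! i)
      \<and> (\<forall>i<length A. \<forall>j<length A. i \<noteq> j \<longrightarrow> A ! i \<inter> A ! j = {})}"

definition tab_act :: "(nat \<Rightarrow> nat) \<Rightarrow> tabloid \<Rightarrow> tabloid" where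
  "tab_act z A = map (\<lambda>S. z ` S) A"

text \<open>Union of the first i rows (missing rows are empty).\<close>
definition rows_upto :: "tabloid \<Rightarrow> nat \<Rightarrow> nat set" where
  "rows_upto A i = \<Union> (set (take i A))"

definition tab_le :: "tabloid \<Rightarrow> tabloid \<Rightarrow> bool" where
  "tab_le A B \<longleftrightarrow> (\<forall>i\<ge>1. rows_upto A i \<subseteq> rows_upto B i)"

text \<open>Subgroup of permutations generated by a set of permutations (finite case: closure
  under composition suffices; all permutations considered here have finite order).\<close>
inductive_set gen_perms :: "(nat \<Rightarrow> nat) set \<Rightarrow> (nat \<Rightarrow> nat) set" for S where
  gen_id: "id \<in> gen_perms S"
| gen_step: "s \<in> S \<Longrightarrow> g \<in> gen_perms S \<Longrightarrow> s \<circ> g \<in> gen_perms S"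

definition orbit_tab :: "(nat \<Rightarrow> nat) set \<Rightarrow> tabloid \<Rightarrow> tabloid set" where
  "orbit_tab G A = (\<lambda>z. tab_act z A) ` G"

definition orbits_shape :: "(nat \<Rightarrow> nat) set \<Rightarrow> nat list \<Rightarrow> tabloid set set" where
  "orbits_shape G lam = orbit_tab G ` tabloids lam"

definition orbits_D :: "(nat \<Rightarrow> nat) set \<Rightarrow> nat list set \<Rightarrow> tabloid set set" where
  "orbits_D G D = (\<Union>mu\<in>D. orbits_shape G mu)"

definition orb_le :: "tabloid set \<Rightarrow> tabloid set \<Rightarrow> bool" where
  "orb_le a b \<longleftrightarrow> (\<exists>A\<in>a. \<exists>B\<in>b. tab_le A B)"

text \<open>Aut_0(T_{D;G}); automorphisms are represented as functions on orbit-sets that are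
  the identity outside T_{D;G}, so that they form a group under composition.\<close>
definition Aut0_set :: "(nat \<Rightarrow> nat) set \<Rightarrow> nat list set \<Rightarrow> (tabloid set \<Rightarrow> tabloid set) set" where
  "Aut0_set G D = {al. bij_betw al (orbits_D G D) (orbits_D G D)
      \<and> (\<forall>a\<in>orbits_D G D. \<forall>b\<in>orbits_D G D. orb_le (al a) (al b) \<longleftrightarrow> orb_le a b)
      \<and> (\<forall>mu\<in>D. al ` orbits_shape G mu = orbits_shape G mu)
      \<and> (\<forall>x. x \<notin> orbits_D G D \<longrightarrow> al x = x)}"

text \<open>Aut_0^{G'}(T_{D;G}): commuting with the action (eta G) O_G(A) = O_G(eta A) of G'/G.\<close>
definition Aut0G'_set :: "(nat \<Rightarrow> nat) set \<Rightarrow> (nat \<Rightarrow> nat) set \<Rightarrow> nat list set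
    \<Rightarrow> (tabloid set \<Rightarrow> tabloid set) set" where
  "Aut0G'_set G G' D = {al \<in> Aut0_set G D. \<forall>eta\<in>G'. \<forall>mu\<in>D. \<forall>A\<in>tabloids mu. \<forall>B.
      al (orbit_tab G A) = orbit_tab G B \<longrightarrow>
      al (orbit_tab G (tab_act eta A)) = orbit_tab G (tab_act eta B)}"

definition fun_group :: "('a \<Rightarrow> 'a) set \<Rightarrow> ('a \<Rightarrow> 'a) monoid" where
  "fun_group X = \<lparr>carrier = X, mult = (\<circ>), one = id\<rparr>"

text \<open>Concrete data. Cycle (a b c) = transpose a b o transpose b c.\<close>
definition G_ex :: "(nat \<Rightarrow> nat) set" where
  "G_ex = gen_perms {transpose 1 3 \<circ> transpose 3 5 \<circ> transpose 2 4 \<circ> transpose 4 6,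
                     transpose 1 4 \<circ> transpose 2 3 \<circ> transpose 5 6}"

definition G'_ex :: "(nat \<Rightarrow> nat) set" where
  "G'_ex = gen_perms {transpose 1 3 \<circ> transpose 3 5 \<circ> transpose 2 4 \<circ> transpose 4 6,
                      transpose 1 4 \<circ> transpose 2 3 \<circ> transpose 5 6,
                      transpose 1 2 \<circ> transpose 3 4 \<circ> transpose 5 6}"

definition D_ex :: "nat list set" where
  "D_ex = {[6], [5,1], [4,2], [4,1,1], [3,3]}"

end

theory Submission
  imports Defs
begin




definition pl :: "nat list \<Rightarrow> nat \<Rightarrow> nat" where
  "pl xs x = (if x = 1 then xs ! 0 else if x = 2 then xs ! 1 else if x = 3 then xs ! 2
     else if x = 4 then xs ! 3 else if x = 5 then xs ! 4 else if x = 6 then xs ! 5 else x)"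

lemma six_cases: "1 \<le> (x::nat) \<Longrightarrow> x \<le> 6 \<Longrightarrow> x = 1 \<or> x = 2 \<or> x = 3 \<or> x = 4 \<or> x = 5 \<or> x = 6"
  by auto

lemma pl_comp:
  assumes "length ys = 6"
  shows "pl xs \<circ> pl ys = pl (map (pl xs) ys)"
  using assms by (auto simp: pl_def fun_eq_iff)

lemma pl_id: "pl [1,2,3,4,5,6] = id"
  by (auto simp: pl_def fun_eq_iff)

lemma gen1: "transpose 1 3 \<circ> transpose 3 5 \<circ> transpose 2 4 \<circ> transpose 4 6 = pl [3,4,5,6,1,2]"
  by (rule ext) (auto simp: pl_def transpose_def)
lemma gen2: "transpose 1 4 \<circ> transpose 2 3 \<circ> transpose 5 6 = pl [4,3,2,1,6,5]"
  by (rule ext) (auto simp: pl_def transpose_def)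
lemma gen3: "transpose 1 2 \<circ> transpose 3 4 \<circ> transpose 5 6 = pl [2,1,4,3,6,5]"
  by (rule ext) (auto simp: pl_def transpose_def)

definition LG :: "nat list list" where
 "LG = [[1, 2, 3, 4, 5, 6], [2, 1, 6, 5, 4, 3], [3, 4, 5, 6, 1, 2], [4, 3, 2, 1, 6, 5], [5, 6, 1, 2, 3, 4], [6, 5, 4, 3, 2, 1]]"
definition LGP :: "nat list list" where
 "LGP = [[1, 2, 3, 4, 5, 6], [1, 2, 5, 6, 3, 4], [2, 1, 4, 3, 6, 5], [2, 1, 6, 5, 4, 3], [3, 4, 1, 2, 5, 6], [3, 4, 5, 6, 1, 2], [4, 3, 2, 1, 6, 5], [4, 3, 6, 5, 2, 1], [5, 6, 1, 2, 3, 4], [5, 6, 3, 4, 1, 2], [6, 5, 2, 1, 4, 3], [6, 5, 4, 3, 2, 1]]"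

lemma gen_word: "set w \<subseteq> S \<Longrightarrow> foldr (\<circ>) w id \<in> gen_perms S"
  by (induction w) (auto intro: gen_perms.intros)

lemma pl_mem_lemma:
  assumes "\<forall>a\<in>set L. \<forall>s\<in>set gs. map (pl s) a \<in> set L"
    and "\<forall>a\<in>set L. length a = 6"
    and "[1,2,3,4,5,6] \<in> set L"
  shows "gen_perms (pl ` set gs) \<subseteq> pl ` set L"
proof
  fix g assume "g \<in> gen_perms (pl ` set gs)"
  then show "g \<in> pl ` set L"
  proof induction
    case gen_id then show ?case using assms(3) pl_id by force
  next
    case (gen_step s g)
    then obtain a b where "s = pl a" "a \<in> set gs" "g = pl b" "b \<in> set L" by auto
    then show ?case using assms(1,2) pl_comp by force
  qed
qed

lemma G_ex_eq: "G_ex = pl ` set LG"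
proof
  have h1: "\<forall>a\<in>set LG. \<forall>s\<in>set [[3,4,5,6,1,2],[4,3,2,1,6,5]]. map (pl s) a \<in> set LG"
    by (simp add: LG_def pl_def)
  have "gen_perms (pl ` set [[3,4,5,6,1,2],[4,3,2,1,6,5]]) \<subseteq> pl ` set LG"
    by (rule pl_mem_lemma[OF h1]) (simp_all add: LG_def)
  then show "G_ex \<subseteq> pl ` set LG" unfolding G_ex_def gen1 gen2 by simp
next
  let ?r = "pl [3,4,5,6,1,2]" and ?s = "pl [4,3,2,1,6,5]"
  have S: "set w \<subseteq> {?r, ?s} \<Longrightarrow> foldr (\<circ>) w id \<in> G_ex" for w
    unfolding G_ex_def gen1 gen2 using gen_word by blast
  have c: "length ys = 6 \<Longrightarrow> pl xs \<circ> pl ys = pl (map (pl xs) ys)" for xs ys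
    by (rule pl_comp)
  have "pl a \<in> G_ex" if "a \<in> set LG" for a
  proof -
    have "a = [1, 2, 3, 4, 5, 6] \<or> a = [2, 1, 6, 5, 4, 3] \<or> a = [3, 4, 5, 6, 1, 2] \<or> a = [4, 3, 2, 1, 6, 5] \<or> a =[5, 6, 1, 2, 3, 4] \<or> a = [6, 5, 4, 3, 2, 1]"
      using that by (simp add: LG_def)
    then show ?thesis
      using S[of "[]"] S[of "[?r]"] S[of "[?r,?r]"] S[of "[?s]"] S[of "[?r,?s]"] S[of "[?r,?r,?s]"]
      by (auto simp: pl_id[symmetric] c pl_def)
  qed
  then show "pl ` set LG \<subseteq> G_ex" by blast
qed



definition ksubs :: "nat \<Rightarrow> nat set list" where
  "ksubs k = filter (\<lambda>S. card S = k) (map set (subseqs [1..<7]))"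

fun tabs :: "nat list \<Rightarrow> tabloid list" where
  "tabs [] = [[]]"
| "tabs (k # lam) = concat (map (\<lambda>S. map (\<lambda>A. S # A) (filter (\<lambda>A. \<forall>T\<in>set A. S \<inter> T = {}) (tabs lam))) (ksubs k))"

lemma set_ksubs: "set (ksubs k) = {S. S \<subseteq> {1..6} \<and> card S = k}"
proof -
  have e: "{1..<7::nat} = {1..6}" by auto
  have p: "set ` set (subseqs [1..<7]) = Pow {1..6::nat}"
    using subseqs_powset[of "[1..<7::nat]"] by (simp only: set_upt e)
  have "set (ksubs k) = {S \<in> set ` set (subseqs [1..<7]). card S = k}" by (auto simp: ksubs_def)
  then show ?thesis unfolding p by auto
qed

lemma tabloids_Nil: "tabloids [] = {[]}"
  by (auto simp: tabloids_def)

lemma Cons_tabloids: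
  "S # A \<in> tabloids (k # lam) \<longleftrightarrow> S \<subseteq> {1..6} \<and> card S = k \<and> A \<in> tabloids lam \<and> (\<forall>T\<in>set A. S \<inter> T = {})"
proof -
  have "(\<forall>i<Suc (length A). \<forall>j<Suc (length A). i \<noteq> j \<longrightarrow> (S # A) ! i \<inter> (S # A) ! j = {})
     \<longleftrightarrow> (\<forall>j<length A. S \<inter> A ! j = {}) \<and> (\<forall>i<length A. \<forall>j<length A. i \<noteq> j \<longrightarrow> A ! i \<inter> A ! j = {})"
    apply (simp only: All_less_Suc2 nth_Cons_0 nth_Cons_Suc)
    apply (simp add: Int_commute)
    by blast
  moreover have "(\<forall>T\<in>set A. S \<inter> T = {}) \<longleftrightarrow> (\<forall>j<length A. S \<inter> A ! j = {})"
    by (rule all_set_conv_all_nth)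
  ultimately show ?thesis
    unfolding tabloids_def by (auto simp: All_less_Suc2)
qed

lemma tabloids_Cons_ne: "A \<in> tabloids (k # lam) \<Longrightarrow> \<exists>S A'. A = S # A'"
  by (cases A) (auto simp: tabloids_def)

lemma set_tabs: "set (tabs lam) = tabloids lam"
proof (induction lam)
  case Nil
  then show ?case by (simp add: tabloids_Nil)
next
  case (Cons k lam)
  show ?case
  proof
    show "set (tabs (k # lam)) \<subseteq> tabloids (k # lam)"
      using Cons by (auto simp: set_ksubs Cons_tabloids)
    show "tabloids (k # lam) \<subseteq> set (tabs (k # lam))"
    proof
      fix A assume A: "A \<in> tabloids (k # lam)"
      then obtain S A' where "A = S # A'" using tabloids_Cons_ne by blast
      then show "A \<in> set (tabs (k # lam))"
        using A Cons by (auto simp: set_ksubs Cons_tabloids)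
    qed
  qed
qed

definition tab_le_c :: "tabloid \<Rightarrow> tabloid \<Rightarrow> bool" where
  "tab_le_c A B = (\<forall>i\<in>set [1..<Suc (Suc (max (length A) (length B)))]. rows_upto A i \<subseteq> rows_upto B i)"

lemma tab_le_c: "tab_le A B = tab_le_c A B"
proof -
  let ?m = "Suc (max (length A) (length B))"
  have big: "rows_upto X i = rows_upto X ?m" if "i \<ge> ?m" "length X \<le> max (length A) (length B)" for X i
    using that by (simp add: rows_upto_def)
  show ?thesis
  proof
    assume "tab_le A B" then show "tab_le_c A B" by (auto simp: tab_le_def tab_le_c_def)
  next
    assume H: "tab_le_c A B"
    show "tab_le A B" unfolding tab_le_def
    proof (intro allI impI)
      fix i :: nat assume "1 \<le> i"
      show "rows_upto A i \<subseteq> rows_upto B i"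
      proof (cases "i \<le> ?m")
        case True
        then have "i \<in> set [1..<Suc ?m]" using \<open>1 \<le> i\<close> by (simp only: set_upt atLeastLessThan_iff) auto
        then show ?thesis using H unfolding tab_le_c_def by blast
      next
        case False
        then have "rows_upto A i = rows_upto A ?m" "rows_upto B i = rows_upto B ?m"
          using big[of i A] big[of i B] by auto
        moreover have "?m \<in> set [1..<Suc ?m]" by (simp only: set_upt atLeastLessThan_iff) auto
        then have "rows_upto A ?m \<subseteq> rows_upto B ?m" using H unfolding tab_le_c_def by blast
        ultimately show ?thesis by simp
      qed
    qed
  qed
qed



definition Ltab :: "bool list list" where
 "Ltab = [[True,False,False,False,False,False,False,False,False,False,False,False,False,False,False], [True,True,False,False,False,False,False,False,False,False,False,False,False,False,False], [True,True,True,False,False,False,False,False,False,False,False,False,False,False,False], [True,True,False,True,False,False,False,False,False,False,False,False,False,False,False], [True,True,False,False,True,False,False,False,False,False,False,False,False,False,False], [True,True,False,False,False,True,False,False,False,False,False,False,False,False,False], [True,True,True,False,False,False,True,False,False,False,False,False,False,False,False], [True,True,False,True,False,False,False,True,False,False,False,False,False,False,False], [True,True,False,True,False,False,False,False,True,False,False,False,False,False,False], [True,True,False,False,True,False,False,False,False,True,False,False,False,False,False], [True,True,False,False,False,True,False,False,False,False,True,False,False,False,False], [True,True,True,True,True,False,False,False,False,False,False,True,False,False,False], [True,True,True,True,False,True,False,False,False,False,False,False,True,False,False], [True,True,False,True,False,False,False,False,False,False,False,False,False,True,False], [True,True,False,True,True,True,False,False,False,False,False,False,False,False,True]]"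


definition CANDS :: "nat list list" where
 "CANDS = [[0, 1, 2, 3, 4, 5, 6, 7, 8, 9, 10, 11, 12, 13, 14], [0, 1, 2, 3, 4, 5, 6, 8, 7, 9, 10, 11, 12, 13, 14], [0, 1, 2, 3, 5, 4, 6, 7, 8, 10, 9, 12, 11, 13, 14], [0, 1, 2, 3, 5, 4, 6, 8, 7, 10, 9, 12, 11, 13, 14], [0, 1, 4, 3, 2, 5, 9, 7, 8, 6, 10, 11, 14, 13, 12], [0, 1, 4, 3, 2, 5, 9, 8, 7, 6, 10, 11, 14, 13, 12], [0, 1, 4, 3, 5, 2, 9, 7, 8, 10, 6, 14, 11, 13, 12], [0, 1, 4, 3, 5, 2, 9, 8, 7, 10, 6, 14, 11, 13, 12], [0, 1, 5, 3, 2, 4, 10, 7, 8, 6, 9, 12, 14, 13, 11], [0, 1, 5, 3, 2, 4, 10, 8, 7, 6, 9, 12, 14, 13, 11], [0, 1, 5, 3, 4, 2, 10, 7, 8, 9, 6, 14, 12, 13, 11], [0, 1, 5, 3, 4, 2, 10, 8, 7, 9, 6, 14, 12, 13, 11]]"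

definition shl :: "nat list" where "shl = [0,1,2,2,2,2,3,3,3,3,3,4,4,4,4]"

lemma lt15: "(x::nat) < 15 \<Longrightarrow> x \<in> set [0,1,2,3,4,5,6,7,8,9,10,11,12,13,14]"
  by simp presburger


lemma map15: "map (\<sigma>::nat\<Rightarrow>nat) [0..<15] = [\<sigma> 0, \<sigma> 1, \<sigma> 2, \<sigma> 3, \<sigma> 4, \<sigma> 5, \<sigma> 6, \<sigma> 7, \<sigma> 8, \<sigma> 9, \<sigma> 10, \<sigma> 11, \<sigma> 12, \<sigma> 13, \<sigma> 14]"
  by (simp add: upt_rec numeral_eq_Suc)

lemma h3: "x \<in> {2,3,4,5} \<Longrightarrow> y \<in> {6,7,8,9,10} \<Longrightarrow> z \<in> {6,7,8,9,10} \<Longrightarrow> Ltab!y!x \<Longrightarrow> Ltab!z!x \<Longrightarrow> y \<noteq> z \<Longrightarrow> x = 3"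
  by (auto simp: Ltab_def)
lemma h78: "x \<in> {6,7,8,9,10} \<Longrightarrow> Ltab!x!3 \<Longrightarrow> x \<in> {7,8}"
  by (auto simp: Ltab_def)
lemma h6: "x \<in> {6,7,8,9,10} \<Longrightarrow> y \<in> {2,4,5} \<Longrightarrow> Ltab!x!y \<Longrightarrow> x = (if y = 2 then 6 else if y = 4 then 9 else 10)"
  by (auto simp: Ltab_def)
lemma h11: "x \<in> {11,12,13,14} \<Longrightarrow> y \<in> {2,4,5} \<Longrightarrow> z \<in> {2,4,5} \<Longrightarrow> w \<in> {2,4,5} \<Longrightarrow> y \<noteq> z \<Longrightarrow> y \<noteq> w \<Longrightarrow> z \<noteq> w \<Longrightarrow> Ltab!x!y \<Longrightarrow> Ltab!x!z \<Longrightarrow> \<not> Ltab!x!w \<Longrightarrow> x = (if w = 5 then 11 else if w = 4 then 12 else 14)"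
  by (auto simp: Ltab_def)
lemma h13: "x \<in> {11,12,13,14} \<Longrightarrow> y \<in> {2,4,5} \<Longrightarrow> z \<in> {2,4,5} \<Longrightarrow> w \<in> {2,4,5} \<Longrightarrow> y \<noteq> z \<Longrightarrow> y \<noteq> w \<Longrightarrow> z \<noteq> w \<Longrightarrow> \<not> Ltab!x!y \<Longrightarrow> \<not> Ltab!x!z \<Longrightarrow> \<not> Ltab!x!w \<Longrightarrow> x = 13"
  by (auto simp: Ltab_def)
lemma Lvals: "Ltab!6!2" "Ltab!9!4" "Ltab!10!5" "Ltab!11!2" "Ltab!11!4" "\<not>Ltab!11!5" "Ltab!12!2" "Ltab!12!5" "\<not>Ltab!12!4" "Ltab!14!4" "Ltab!14!5" "\<not>Ltab!14!2" "\<not>Ltab!13!2" "\<not>Ltab!13!4" "\<not>Ltab!13!5" "Ltab!7!3" "Ltab!8!3"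
  by (simp_all add: Ltab_def)

lemma comb:
  fixes \<sigma> :: "nat \<Rightarrow> nat"
  assumes rng: "\<forall>i<15. \<sigma> i < 15"
  and inj: "inj_on \<sigma> {..<15}"
  and L: "\<forall>i<15. \<forall>j<15. Ltab!(\<sigma> i)!(\<sigma> j) = Ltab!i!j"
  and sh: "\<forall>i<15. shl!(\<sigma> i) = shl!i"
  shows "map \<sigma> [0..<15] \<in> set CANDS"
proof -
  have cl: "\<sigma> i \<in> set (filter (\<lambda>j. shl!j = shl!i) [0,1,2,3,4,5,6,7,8,9,10,11,12,13,14])" if "i < 15" for i
    unfolding set_filter using rng sh that lt15[of "\<sigma> i"] by blast
  have c: "\<sigma> 0 = 0" "\<sigma> 1 = 1" "\<sigma> 2 \<in> {2,3,4,5}" "\<sigma> 3 \<in> {2,3,4,5}" "\<sigma> 4 \<in> {2,3,4,5}" "\<sigma> 5 \<in> {2,3,4,5}" "\<sigma> 6 \<in> {6,7,8,9,10}" "\<sigma> 7 \<in> {6,7,8,9,10}" "\<sigma> 8 \<in> {6,7,8,9,10}" "\<sigma> 9 \<in> {6,7,8,9,10}" "\<sigma> 10 \<in> {6,7,8,9,10}" "\<sigma> 11 \<in> {11,12,13,14}" "\<sigma> 12 \<in> {11,12,13,14}" "\<sigma> 13 \<in> {11,12,13,14}" "\<sigma> 14 \<in> {11,12,13,14}"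
    apply -
    subgoal using cl[of 0] by (simp add: shl_def)
    subgoal using cl[of 1] by (simp add: shl_def)
    subgoal using cl[of 2] by (simp add: shl_def)
    subgoal using cl[of 3] by (simp add: shl_def)
    subgoal using cl[of 4] by (simp add: shl_def)
    subgoal using cl[of 5] by (simp add: shl_def)
    subgoal using cl[of 6] by (simp add: shl_def)
    subgoal using cl[of 7] by (simp add: shl_def)
    subgoal using cl[of 8] by (simp add: shl_def)
    subgoal using cl[of 9] by (simp add: shl_def)
    subgoal using cl[of 10] by (simp add: shl_def)
    subgoal using cl[of 11] by (simp add: shl_def)
    subgoal using cl[of 12] by (simp add: shl_def)
    subgoal using cl[of 13] by (simp add: shl_def)
    subgoal using cl[of 14] by (simp add: shl_def)
    done
  have Lv: "Ltab!(\<sigma> i)!(\<sigma> j) = Ltab!i!j" if "i < 15" "j < 15" for i j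
    using L that by blast
  have d: "\<sigma> i \<noteq> \<sigma> j" if "i < 15" "j < 15" "i \<noteq> j" for i j
    using inj that by (auto dest: inj_onD)
  have s3: "\<sigma> 3 = 3"
    using h3[OF c(4) c(8) c(9)] Lv[of 7 3] Lv[of 8 3] d[of 7 8] Lvals by simp
  have L73: "Ltab!(\<sigma> 7)!3" "Ltab!(\<sigma> 8)!3" using Lv[of 7 3] Lv[of 8 3] s3 Lvals by simp_all
  have s78: "\<sigma> 7 \<in> {7,8}" "\<sigma> 8 \<in> {7,8}" "\<sigma> 7 \<noteq> \<sigma> 8"
    using h78[OF c(8) L73(1)] h78[OF c(9) L73(2)] d[of 7 8] by auto
  have s245: "\<sigma> 2 \<in> {2,4,5}" "\<sigma> 4 \<in> {2,4,5}" "\<sigma> 5 \<in> {2,4,5}"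
    "\<sigma> 2 \<noteq> \<sigma> 4" "\<sigma> 2 \<noteq> \<sigma> 5" "\<sigma> 4 \<noteq> \<sigma> 5"
    using c(3,5,6) s3 d[of 2 3] d[of 4 3] d[of 5 3] d[of 2 4] d[of 2 5] d[of 4 5] by auto
  have Lx: "Ltab!(\<sigma> 6)!(\<sigma> 2)" "Ltab!(\<sigma> 9)!(\<sigma> 4)" "Ltab!(\<sigma> 10)!(\<sigma> 5)"
    "Ltab!(\<sigma> 11)!(\<sigma> 2)" "Ltab!(\<sigma> 11)!(\<sigma> 4)" "\<not>Ltab!(\<sigma> 11)!(\<sigma> 5)"
    "Ltab!(\<sigma> 12)!(\<sigma> 2)" "Ltab!(\<sigma> 12)!(\<sigma> 5)" "\<not>Ltab!(\<sigma> 12)!(\<sigma> 4)"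
    "Ltab!(\<sigma> 14)!(\<sigma> 4)" "Ltab!(\<sigma> 14)!(\<sigma> 5)" "\<not>Ltab!(\<sigma> 14)!(\<sigma> 2)"
    "\<not>Ltab!(\<sigma> 13)!(\<sigma> 2)" "\<not>Ltab!(\<sigma> 13)!(\<sigma> 4)" "\<not>Ltab!(\<sigma> 13)!(\<sigma> 5)"
    using Lv[of 6 2] Lv[of 9 4] Lv[of 10 5] Lv[of 11 2] Lv[of 11 4] Lv[of 11 5]
      Lv[of 12 2] Lv[of 12 5] Lv[of 12 4] Lv[of 14 4] Lv[of 14 5] Lv[of 14 2]
      Lv[of 13 2] Lv[of 13 4] Lv[of 13 5] Lvals
    by simp_all
  have s6: "\<sigma> 6 = (if \<sigma> 2 = 2 then 6 else if \<sigma> 2 = 4 then 9 else 10)"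
    using h6[OF c(7) s245(1) Lx(1)] .
  have s9: "\<sigma> 9 = (if \<sigma> 4 = 2 then 6 else if \<sigma> 4 = 4 then 9 else 10)"
    using h6[OF c(10) s245(2) Lx(2)] .
  have s10: "\<sigma> 10 = (if \<sigma> 5 = 2 then 6 else if \<sigma> 5 = 4 then 9 else 10)"
    using h6[OF c(11) s245(3) Lx(3)] .
  have s11: "\<sigma> 11 = (if \<sigma> 5 = 5 then 11 else if \<sigma> 5 = 4 then 12 else 14)"
    using h11[OF c(12) s245(1,2,3) s245(4,5,6) Lx(4,5,6)] .
  have s12: "\<sigma> 12 = (if \<sigma> 4 = 5 then 11 else if \<sigma> 4 = 4 then 12 else 14)"
    using h11[OF c(13) s245(1,3,2) s245(5,4) s245(6)[symmetric] Lx(7,8,9)] .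
  have s14: "\<sigma> 14 = (if \<sigma> 2 = 5 then 11 else if \<sigma> 2 = 4 then 12 else 14)"
    using h11[OF c(15) s245(2,3,1) s245(6) s245(4)[symmetric] s245(5)[symmetric] Lx(10,11,12)] .
  have s13: "\<sigma> 13 = 13"
    using h13[OF c(14) s245 Lx(13,14,15)] .
  show ?thesis
    using s245(1,2,3) s78(1,2) s245(4,5,6) s78(3)
    unfolding map15 s6 s9 s10 s11 s12 s13 s14 s3 c(1,2)
    by (elim insertE emptyE; simp add: CANDS_def)
qed


lemma gen_comp: "g \<in> gen_perms S \<Longrightarrow> h \<in> gen_perms S \<Longrightarrow> g \<circ> h \<in> gen_perms S"
  by (induction rule: gen_perms.induct) (simp_all add: comp_assoc gen_perms.gen_step)

lemma gen_mono:
  assumes "S \<subseteq> S'" shows "gen_perms S \<subseteq> gen_perms S'"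
proof
  fix g assume "g \<in> gen_perms S"
  then show "g \<in> gen_perms S'"
    by induction (use assms in \<open>blast intro: gen_perms.intros\<close>)+
qed

lemma gen_base: "s \<in> S \<Longrightarrow> s \<in> gen_perms S"
  using gen_step[OF _ gen_id, of s S] by simp

lemma LGP_decomp: "set LGP = set LG \<union> (\<lambda>a. map (pl a) [2,1,4,3,6,5]) ` set LG"
  by (simp add: LGP_def LG_def pl_def insert_commute)

lemma G'_ex_eq: "G'_ex = pl ` set LGP"
proof
  have h1: "\<forall>a\<in>set LGP. \<forall>s\<in>set [[3,4,5,6,1,2],[4,3,2,1,6,5],[2,1,4,3,6,5]]. map (pl s) a \<in> set LGP"
    by (simp add: LGP_def pl_def)
  have "gen_perms (pl ` set [[3,4,5,6,1,2],[4,3,2,1,6,5],[2,1,4,3,6,5]]) \<subseteq> pl ` set LGP"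
    by (rule pl_mem_lemma[OF h1]) (simp_all add: LGP_def)
  then show "G'_ex \<subseteq> pl ` set LGP" unfolding G'_ex_def gen1 gen2 gen3 by simp
next
  have sub: "G_ex \<subseteq> G'_ex" unfolding G_ex_def G'_ex_def by (rule gen_mono) auto
  have t: "pl [2,1,4,3,6,5] \<in> G'_ex" unfolding G'_ex_def gen3 by (rule gen_base) simp
  show "pl ` set LGP \<subseteq> G'_ex"
  proof
    fix x assume "x \<in> pl ` set LGP"
    then obtain a where a: "a \<in> set LG" "x = pl a \<or> x = pl (map (pl a) [2,1,4,3,6,5])"
      unfolding LGP_decomp by auto
    have "pl a \<in> G'_ex" using a(1) sub G_ex_eq by auto
    moreover have "pl (map (pl a) [2,1,4,3,6,5]) = pl a \<circ> pl [2,1,4,3,6,5]" by (simp add: pl_comp)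
    ultimately show "x \<in> G'_ex" using a(2) t gen_comp[of "pl a" _ "pl [2,1,4,3,6,5]"] unfolding G'_ex_def by auto
  qed
qed




definition reps :: "tabloid list" where
 "reps = [[{1,2,3,4,5,6}], [{1,2,3,4,5}, {6}], [{1,2,3,4}, {5,6}], [{1,2,3,5}, {4,6}], [{1,2,3,6}, {4,5}], [{1,2,4,5}, {3,6}], [{1,2,3,4}, {5}, {6}], [{1,2,3,5}, {4}, {6}], [{1,2,3,5}, {6}, {4}], [{1,2,3,6}, {4}, {5}], [{1,2,4,5}, {3}, {6}], [{1,2,3}, {4,5,6}], [{1,2,4}, {3,5,6}], [{1,3,5}, {2,4,6}], [{1,3,6}, {2,4,5}]]"

definition ol :: "nat \<Rightarrow> tabloid set" where "ol i = orbit_tab G_ex (reps ! i)"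

definition tau :: "nat list" where "tau = [0, 1, 2, 3, 5, 4, 6, 8, 7, 10, 9, 12, 11, 13, 14]"

lemma F_shape:
  "orbits_shape G_ex [6] = ol ` {0}"
  "orbits_shape G_ex [5,1] = ol ` {1}"
  "orbits_shape G_ex [4,2] = ol ` {2,3,4,5}"
  "orbits_shape G_ex [4,1,1] = ol ` {6,7,8,9,10}"
  "orbits_shape G_ex [3,3] = ol ` {11,12,13,14}"
  unfolding orbits_shape_def set_tabs[symmetric] ol_def G_ex_eq reps_def LG_def
  by code_simp+

lemma F_dist: "distinct (map ol [0..<15])"
  unfolding ol_def G_ex_eq reps_def LG_def
  by code_simp

lemma F_tau: "\<forall>k\<in>set [0..<15]. orbit_tab G_ex (tab_act (pl [2,1,4,3,6,5]) (reps!k)) = ol (tau!k)"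
  unfolding ol_def G_ex_eq reps_def LG_def tau_def
  by code_simp

lemma F_le: "\<forall>i\<in>set [0..<15]. \<forall>j\<in>set [0..<15]. orb_le (ol i) (ol j) = Ltab!i!j"
  unfolding ol_def G_ex_eq reps_def LG_def Ltab_def orb_le_def tab_le_c
  by code_simp

lemma C1: "\<forall>a\<in>set LG. \<forall>b\<in>set LG. map (pl a) b \<in> set LG"
  unfolding LG_def pl_def by code_simp
lemma C1': "\<forall>a\<in>set LG. \<forall>b\<in>set LG. \<exists>c\<in>set LG. map (pl c) b = a"
  unfolding LG_def pl_def by code_simp
lemma C2: "\<forall>e\<in>set LGP. \<forall>b\<in>set LG. \<exists>c\<in>set LG. map (pl e) b = map (pl c) e"
  unfolding LGP_def LG_def pl_def by code_simp
lemma LG_len: "\<forall>a\<in>set LG. length a = 6" "\<forall>a\<in>set LGP. length a = 6"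
  unfolding LGP_def LG_def by simp_all




definition CANDS2 :: "nat list list" where
 "CANDS2 = [[0, 1, 2, 3, 4, 5, 6, 7, 8, 9, 10, 11, 12, 13, 14], [0, 1, 2, 3, 4, 5, 6, 8, 7, 9, 10, 11, 12, 13, 14], [0, 1, 2, 3, 5, 4, 6, 7, 8, 10, 9, 12, 11, 13, 14], [0, 1, 2, 3, 5, 4, 6, 8, 7, 10, 9, 12, 11, 13, 14]]"

lemma ol_inj: "inj_on ol {..<15}"
proof -
  have "inj_on ol (set [0..<15])" using F_dist distinct_map by blast
  moreover have "set [0..<(15::nat)] = {..<15}" by auto
  ultimately show ?thesis by simp
qed

lemma ol_le: "i < 15 \<Longrightarrow> j < 15 \<Longrightarrow> orb_le (ol i) (ol j) = Ltab!i!j"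
  using F_le by simp

lemma cls_union: "{0} \<union> {1} \<union> {2,3,4,5} \<union> {6,7,8,9,10} \<union> {11,12,13,14} = {..<(15::nat)}"
  by (auto dest: lt15)

lemma O_eq: "orbits_D G_ex D_ex = ol ` {..<15}"
proof -
  have "orbits_D G_ex D_ex = ol`{0} \<union> (ol`{1} \<union> (ol`{2,3,4,5} \<union> (ol`{6,7,8,9,10} \<union> (ol`{11,12,13,14} \<union> {}))))"
    unfolding orbits_D_def D_ex_def UN_insert UN_empty F_shape by (rule refl)
  also have "\<dots> = ol ` ({0} \<union> {1} \<union> {2,3,4,5} \<union> {6,7,8,9,10} \<union> {11,12,13,14})"
    by (simp only: image_Un Un_empty_right Un_assoc)
  finally show ?thesis by (simp only: cls_union)
qed

definition idx :: "tabloid set \<Rightarrow> nat" where "idx x = inv_into {..<15} ol x"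

definition lift :: "(nat \<Rightarrow> nat) \<Rightarrow> tabloid set \<Rightarrow> tabloid set" where
  "lift \<sigma> x = (if x \<in> ol ` {..<15} then ol (\<sigma> (idx x)) else x)"

lemma idx_ol: "i < 15 \<Longrightarrow> idx (ol i) = i"
  unfolding idx_def using ol_inj by (simp add: inv_into_f_f)

lemma lift_ol: "i < 15 \<Longrightarrow> lift \<sigma> (ol i) = ol (\<sigma> i)"
  by (simp add: lift_def idx_ol)

lemma lift_out: "x \<notin> ol ` {..<15} \<Longrightarrow> lift \<sigma> x = x"
  by (simp add: lift_def)

lemma ol_eq_iff: "i < 15 \<Longrightarrow> j < 15 \<Longrightarrow> ol i = ol j \<longleftrightarrow> i = j"
  using ol_inj by (auto dest: inj_onD)

lemma CANDS_facts:
  "\<forall>c\<in>set CANDS. length c = 15 \<and> distinct c \<and> (\<forall>i\<in>set c. i < 15)"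
  "\<forall>c\<in>set CANDS. \<forall>i\<in>set [0..<15]. \<forall>j\<in>set [0..<15]. Ltab!(c!i)!(c!j) = Ltab!i!j"
  "\<forall>c\<in>set CANDS. nth c ` {0} = {0} \<and> nth c ` {1} = {1} \<and> nth c ` {2,3,4,5} = {2,3,4,5}
      \<and> nth c ` {6,7,8,9,10} = {6,7,8,9,10} \<and> nth c ` {11,12,13,14} = {11,12,13,14}"
  unfolding CANDS_def Ltab_def by code_simp+

lemma shl_cls:
  assumes "i < 15"
    "i \<in> {2,3,4,5} \<Longrightarrow> s \<in> {2,3,4,5}" "i \<in> {6,7,8,9,10} \<Longrightarrow> s \<in> {6,7,8,9,10}"
    "i \<in> {11,12,13,14} \<Longrightarrow> s \<in> {11,12,13,14}" "i = 0 \<Longrightarrow> s = 0" "i = 1 \<Longrightarrow> s = 1"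
  shows "shl ! s = shl ! i"
  using lt15[OF assms(1)] assms(2-6) by (auto simp: shl_def)

lemma Aut0_char: "Aut0_set G_ex D_ex = (\<lambda>c. lift (nth c)) ` set CANDS"
proof
  show "Aut0_set G_ex D_ex \<subseteq> (\<lambda>c. lift (nth c)) ` set CANDS"
  proof
    fix al assume al: "al \<in> Aut0_set G_ex D_ex"
    note A = al[unfolded Aut0_set_def mem_Collect_eq O_eq]
    note A1 = A[THEN conjunct1] and A2 = A[THEN conjunct2, THEN conjunct1]
      and A3 = A[THEN conjunct2, THEN conjunct2, THEN conjunct1]
      and A4 = A[THEN conjunct2, THEN conjunct2, THEN conjunct2]
    define \<sigma> where "\<sigma> i = idx (al (ol i))" for i
    have in_O: "al (ol i) \<in> ol ` {..<15}" if "i < 15" for i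
      using A1 that by (auto dest: bij_betwE)
    have rng: "\<sigma> i < 15" and al_ol: "al (ol i) = ol (\<sigma> i)" if "i < 15" for i
    proof -
      obtain x where "x < 15" "al (ol i) = ol x" using in_O[of i] \<open>i < 15\<close> by auto
      then show "\<sigma> i < 15" "al (ol i) = ol (\<sigma> i)" unfolding \<sigma>_def by (simp_all add: idx_ol)
    qed
    have inj: "inj_on \<sigma> {..<15}"
    proof (rule inj_onI)
      fix i j assume ij: "i \<in> {..<15}" "j \<in> {..<15}" "\<sigma> i = \<sigma> j"
      then have "al (ol i) = al (ol j)" using al_ol by auto
      moreover have "inj_on al (ol ` {..<15})" using A1 by (auto simp: bij_betw_def)
      ultimately have "ol i = ol j" using ij by (auto dest: inj_onD)
      then show "i = j" using ij ol_eq_iff by auto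
    qed
    have L: "Ltab!(\<sigma> i)!(\<sigma> j) = Ltab!i!j" if "i < 15" "j < 15" for i j
    proof -
      have "Ltab!(\<sigma> i)!(\<sigma> j) = orb_le (al (ol i)) (al (ol j))"
        using that rng al_ol ol_le by simp
      also have "\<dots> = orb_le (ol i) (ol j)" using A2 that by blast
      also have "\<dots> = Ltab!i!j" using that ol_le by simp
      finally show ?thesis .
    qed
    have cl: "\<sigma> i \<in> C" if "mu \<in> D_ex" "orbits_shape G_ex mu = ol ` C" "C \<subseteq> {..<15}" "i \<in> C" for mu C i
    proof -
      have "al ` orbits_shape G_ex mu = orbits_shape G_ex mu" using A3 that(1) by blast
      then have "al ` (ol ` C) = ol ` C" using that(2) by simp
      then have "al (ol i) \<in> ol ` C" using imageI[of "ol i" "ol ` C" al] that(4) by auto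
      then obtain j where "j \<in> C" "al (ol i) = ol j" by auto
      moreover have "i < 15" "j < 15" using that(3,4) \<open>j \<in> C\<close> by auto
      ultimately show ?thesis using al_ol[of i] rng[of i] ol_eq_iff[of "\<sigma> i" j] by auto
    qed
    have sh: "shl!(\<sigma> i) = shl!i" if "i < 15" for i
    proof (rule shl_cls[OF that])
      show "i \<in> {2,3,4,5} \<Longrightarrow> \<sigma> i \<in> {2,3,4,5}" by (rule cl[OF _ F_shape(3)]) (auto simp: D_ex_def)
      show "i \<in> {6,7,8,9,10} \<Longrightarrow> \<sigma> i \<in> {6,7,8,9,10}" by (rule cl[OF _ F_shape(4)]) (auto simp: D_ex_def)
      show "i \<in> {11,12,13,14} \<Longrightarrow> \<sigma> i \<in> {11,12,13,14}" by (rule cl[OF _ F_shape(5)]) (auto simp: D_ex_def)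
      show "i = 0 \<Longrightarrow> \<sigma> i = 0" using cl[OF _ F_shape(1), of 0] by (auto simp: D_ex_def)
      show "i = 1 \<Longrightarrow> \<sigma> i = 1" using cl[OF _ F_shape(2), of 1] by (auto simp: D_ex_def)
    qed
    have c: "map \<sigma> [0..<15] \<in> set CANDS"
      by (rule comb) (use rng inj L sh in auto)
    have "al = lift (nth (map \<sigma> [0..<15]))"
    proof
      fix x show "al x = lift (nth (map \<sigma> [0..<15])) x"
      proof (cases "x \<in> ol ` {..<15}")
        case True
        then obtain i where "i < 15" "x = ol i" by auto
        then show ?thesis using al_ol lift_ol by simp
      next
        case False
        then show ?thesis using A4 lift_out by (auto simp: O_eq)
      qed
    qed
    then show "al \<in> (\<lambda>c. lift (nth c)) ` set CANDS" using c by blast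
  qed
next
  show "(\<lambda>c. lift (nth c)) ` set CANDS \<subseteq> Aut0_set G_ex D_ex"
  proof
    fix al assume "al \<in> (\<lambda>c. lift (nth c)) ` set CANDS"
    then obtain c where c: "c \<in> set CANDS" and al: "al = lift (nth c)" by auto
    have len: "length c = 15" and dis: "distinct c" and rng: "\<And>i. i < 15 \<Longrightarrow> c!i < 15"
    proof -
      have f: "length c = 15 \<and> distinct c \<and> (\<forall>i\<in>set c. i < 15)" using CANDS_facts(1) c by blast
      then show "length c = 15" "distinct c" by auto
      fix i :: nat assume "i < 15" then show "c!i < 15" using f nth_mem[of i c] by auto
    qed
    have L: "Ltab!(c!i)!(c!j) = Ltab!i!j" if "i < 15" "j < 15" for i j
      using CANDS_facts(2) c that by auto
    have img: "lift (nth c) ` ol ` C = ol ` C" if "nth c ` C = C" "C \<subseteq> {..<15}" for C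
    proof -
      have "lift (nth c) ` ol ` C = ol ` nth c ` C"
        using that(2) by (force simp: lift_ol image_iff)
      then show ?thesis using that(1) by simp
    qed
    have f3: "nth c ` {0} = {0} \<and> nth c ` {1} = {1} \<and> nth c ` {2,3,4,5} = {2,3,4,5}
      \<and> nth c ` {6,7,8,9,10} = {6,7,8,9,10} \<and> nth c ` {11,12,13,14} = {11,12,13,14}"
      by (rule bspec[OF CANDS_facts(3) c])
    have setc: "nth c ` {..<15} = {..<15}"
      unfolding cls_union[symmetric] image_Un using f3 by (simp only:)
    have bij: "bij_betw al (ol ` {..<15}) (ol ` {..<15})"
      unfolding bij_betw_def
    proof
      show "inj_on al (ol ` {..<15})"
      proof (rule inj_onI)
        fix x y assume "x \<in> ol ` {..<15}" "y \<in> ol ` {..<15}" "al x = al y"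
        then obtain i j where "i < 15" "j < 15" "x = ol i" "y = ol j" "ol (c!i) = ol (c!j)"
          using al lift_ol by auto
        then show "x = y" using rng ol_eq_iff dis len by (simp add: nth_eq_iff_index_eq)
      qed
      have "al ` ol ` {..<15} = ol ` (nth c ` {..<15})" using al by (force simp: lift_ol image_iff)
      then show "al ` ol ` {..<15} = ol ` {..<15}" using setc by simp
    qed
    have ord: "orb_le (al a) (al b) = orb_le a b" if "a \<in> ol ` {..<15}" "b \<in> ol ` {..<15}" for a b
      using that al L rng by (auto simp: lift_ol ol_le)
    have shp: "al ` orbits_shape G_ex mu = orbits_shape G_ex mu" if "mu \<in> D_ex" for mu
    proof -
      from that have "mu = [6] \<or> mu = [5,1] \<or> mu = [4,2] \<or> mu = [4,1,1] \<or> mu = [3,3]"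
        by (simp add: D_ex_def)
      then show ?thesis
      proof (elim disjE)
        assume m: "mu = [6]" show ?thesis unfolding m F_shape al using f3 by (intro img) auto
      next
        assume m: "mu = [5,1]" show ?thesis unfolding m F_shape al using f3 by (intro img) auto
      next
        assume m: "mu = [4,2]" show ?thesis unfolding m F_shape al using f3 by (intro img) auto
      next
        assume m: "mu = [4,1,1]" show ?thesis unfolding m F_shape al using f3 by (intro img) auto
      next
        assume m: "mu = [3,3]" show ?thesis unfolding m F_shape al using f3 by (intro img) auto
      qed
    qed
    show "al \<in> Aut0_set G_ex D_ex"
      unfolding Aut0_set_def mem_Collect_eq O_eq
      using bij ord shp al lift_out by auto
  qed
qed




lemma tab_act_comp: "tab_act a (tab_act b X) = tab_act (a \<circ> b) X"
  by (simp add: tab_act_def image_comp)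

lemma tab_act_id: "tab_act id X = X"
  by (simp add: tab_act_def)

lemma id_G: "id \<in> G_ex"
  unfolding G_ex_def by (rule gen_perms.gen_id)

lemma orbit_self: "X \<in> orbit_tab G_ex X"
  unfolding orbit_tab_def by (rule image_eqI[of _ _ id]) (simp_all add: tab_act_id id_G)

lemma K0:
  assumes "g \<in> G_ex"
  shows "orbit_tab G_ex (tab_act g X) = orbit_tab G_ex X"
proof -
  obtain b where b: "b \<in> set LG" "g = pl b" using assms G_ex_eq by auto
  have lb: "length b = 6" using b LG_len by auto
  have "orbit_tab G_ex (tab_act g X) = (\<lambda>z. tab_act z X) ` ((\<lambda>z. z \<circ> g) ` G_ex)"
    unfolding orbit_tab_def by (simp add: tab_act_comp image_image)
  moreover have "(\<lambda>z. z \<circ> g) ` G_ex = G_ex"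
  proof
    show "(\<lambda>z. z \<circ> g) ` G_ex \<subseteq> G_ex"
    proof
      fix w assume "w \<in> (\<lambda>z. z \<circ> g) ` G_ex"
      then obtain x where x: "x \<in> G_ex" "w = x \<circ> g" by auto
      obtain a where a0: "a \<in> set LG" "x = pl a" using x(1) G_ex_eq by auto
      then have a: "a \<in> set LG" "w = pl a \<circ> pl b" using x(2) b(2) by auto
      then have "w = pl (map (pl a) b)" using pl_comp lb by simp
      then show "w \<in> G_ex" using C1 a b G_ex_eq by auto
    qed
    show "G_ex \<subseteq> (\<lambda>z. z \<circ> g) ` G_ex"
    proof
      fix w assume "w \<in> G_ex"
      then obtain a where a: "a \<in> set LG" "w = pl a" using G_ex_eq by auto
      then obtain c where c: "c \<in> set LG" "map (pl c) b = a" using C1' b by blast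
      then have "w = pl c \<circ> g" using a b pl_comp lb by simp
      then show "w \<in> (\<lambda>z. z \<circ> g) ` G_ex" using c G_ex_eq by auto
    qed
  qed
  ultimately show ?thesis unfolding orbit_tab_def by simp
qed

lemma K:
  assumes "eta \<in> G'_ex" "g \<in> G_ex"
  shows "orbit_tab G_ex (tab_act eta (tab_act g X)) = orbit_tab G_ex (tab_act eta X)"
proof -
  obtain e where e: "e \<in> set LGP" "eta = pl e" using assms(1) G'_ex_eq by auto
  obtain b where b: "b \<in> set LG" "g = pl b" using assms(2) G_ex_eq by auto
  obtain c where c: "c \<in> set LG" "map (pl e) b = map (pl c) e" using C2 e b by blast
  have "eta \<circ> g = pl c \<circ> eta"
    using e b c pl_comp LG_len by auto
  then have "tab_act eta (tab_act g X) = tab_act (pl c) (tab_act eta X)"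
    by (simp add: tab_act_comp)
  moreover have "pl c \<in> G_ex" using c G_ex_eq by auto
  ultimately show ?thesis using K0 by simp
qed

lemma Gp_cases: "eta \<in> G'_ex \<Longrightarrow> eta \<in> G_ex \<or> (\<exists>g\<in>G_ex. eta = g \<circ> pl [2,1,4,3,6,5])"
  unfolding G'_ex_eq LGP_decomp G_ex_eq using pl_comp by auto

lemma t_in: "pl [2,1,4,3,6,5] \<in> G'_ex"
  unfolding G'_ex_eq by (simp add: LGP_def)

lemma t_notin: "pl [2,1,4,3,6,5] \<notin> G_ex"
proof
  assume "pl [2,1,4,3,6,5] \<in> G_ex"
  then obtain a where a: "a \<in> set LG" "pl [2,1,4,3,6,5] = pl a" using G_ex_eq by auto
  have "\<forall>a\<in>set LG. map (pl a) [1,2,3,4,5,6] \<noteq> [2,1,4,3,6,5]" by (simp add: LG_def pl_def)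
  moreover have "map (pl a) [1,2,3,4,5,6] = [2,1,4,3,6,5]" using a(2)[symmetric] by (simp add: pl_def)
  ultimately show False using a(1) by auto
qed

definition tauE :: "(nat \<Rightarrow> nat) \<Rightarrow> nat \<Rightarrow> nat" where
  "tauE eta k = (if eta \<in> G_ex then k else tau ! k)"

lemma tau_rng: "k < 15 \<Longrightarrow> tau ! k < 15"
  using lt15[of k] by (auto simp: tau_def)

lemma tauE_rng: "k < 15 \<Longrightarrow> tauE eta k < 15"
  using tau_rng by (simp add: tauE_def)

lemma E:
  assumes "eta \<in> G'_ex" "k < 15" "B \<in> ol k"
  shows "orbit_tab G_ex (tab_act eta B) = ol (tauE eta k)"
proof -
  obtain g where g: "g \<in> G_ex" "B = tab_act g (reps ! k)" using assms(3) by (auto simp: ol_def orbit_tab_def)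
  have "orbit_tab G_ex (tab_act eta B) = orbit_tab G_ex (tab_act eta (reps ! k))"
    using K[OF assms(1) g(1)] g(2) by simp
  also have "\<dots> = ol (tauE eta k)"
  proof (cases "eta \<in> G_ex")
    case True
    then show ?thesis using K0 by (simp add: tauE_def ol_def)
  next
    case False
    then obtain g' where g': "g' \<in> G_ex" "eta = g' \<circ> pl [2,1,4,3,6,5]" using Gp_cases assms(1) by blast
    then have "orbit_tab G_ex (tab_act eta (reps ! k)) = orbit_tab G_ex (tab_act (pl [2,1,4,3,6,5]) (reps ! k))"
      using K0 by (simp add: tab_act_comp[symmetric])
    also have "\<dots> = ol (tau ! k)" using F_tau assms(2) by simp
    finally show ?thesis using False by (simp add: tauE_def)
  qed
  finally show ?thesis .
qed

lemma orbit_in_O: "mu \<in> D_ex \<Longrightarrow> A \<in> tabloids mu \<Longrightarrow> \<exists>k<15. orbit_tab G_ex A = ol k"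
proof -
  assume "mu \<in> D_ex" "A \<in> tabloids mu"
  then have "orbit_tab G_ex A \<in> orbits_D G_ex D_ex" unfolding orbits_D_def orbits_shape_def by blast
  then show ?thesis unfolding O_eq by auto
qed

lemma shape_rep: "k < 15 \<Longrightarrow> \<exists>mu\<in>D_ex. \<exists>A\<in>tabloids mu. orbit_tab G_ex A = ol k"
proof -
  assume "k < 15"
  then have "ol k \<in> orbits_D G_ex D_ex" unfolding O_eq by auto
  then show ?thesis unfolding orbits_D_def orbits_shape_def by auto
qed

lemma cond_iff:
  assumes c: "c \<in> set CANDS"
  shows "(\<forall>eta\<in>G'_ex. \<forall>mu\<in>D_ex. \<forall>A\<in>tabloids mu. \<forall>B.
      lift (nth c) (orbit_tab G_ex A) = orbit_tab G_ex B \<longrightarrow>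
      lift (nth c) (orbit_tab G_ex (tab_act eta A)) = orbit_tab G_ex (tab_act eta B))
    \<longleftrightarrow> (\<forall>k<15. c!(tau!k) = tau!(c!k))"
proof -
  have rng: "c!k < 15" if "k < 15" for k
  proof -
    have f: "length c = 15 \<and> distinct c \<and> (\<forall>i\<in>set c. i < 15)" using CANDS_facts(1) c by blast
    then show ?thesis using that nth_mem[of k c] by auto
  qed
  show ?thesis
  proof
    assume H: "\<forall>eta\<in>G'_ex. \<forall>mu\<in>D_ex. \<forall>A\<in>tabloids mu. \<forall>B.
      lift (nth c) (orbit_tab G_ex A) = orbit_tab G_ex B \<longrightarrow>
      lift (nth c) (orbit_tab G_ex (tab_act eta A)) = orbit_tab G_ex (tab_act eta B)"
    show "\<forall>k<15. c!(tau!k) = tau!(c!k)"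
    proof (intro allI impI)
      fix k :: nat assume k: "k < 15"
      obtain mu A where mu: "mu \<in> D_ex" "A \<in> tabloids mu" "orbit_tab G_ex A = ol k"
        using shape_rep[OF k] by blast
      define B where "B = reps ! (c!k)"
      have oB: "orbit_tab G_ex B = ol (c!k)" by (simp add: B_def ol_def)
      have "lift (nth c) (orbit_tab G_ex A) = orbit_tab G_ex B"
        using mu(3) oB lift_ol k by simp
      then have "lift (nth c) (orbit_tab G_ex (tab_act (pl [2,1,4,3,6,5]) A))
          = orbit_tab G_ex (tab_act (pl [2,1,4,3,6,5]) B)"
        using H t_in mu(1,2) by blast
      moreover have "orbit_tab G_ex (tab_act (pl [2,1,4,3,6,5]) A) = ol (tau!k)"
        using E[OF t_in k, of A] orbit_self[of A] mu(3) t_notin by (simp add: tauE_def)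
      moreover have "orbit_tab G_ex (tab_act (pl [2,1,4,3,6,5]) B) = ol (tau!(c!k))"
        using E[OF t_in rng[OF k], of B] orbit_self[of B] oB t_notin by (simp add: tauE_def)
      ultimately have "ol (c!(tau!k)) = ol (tau!(c!k))"
        using lift_ol tau_rng k by simp
      then show "c!(tau!k) = tau!(c!k)"
        using ol_eq_iff rng tau_rng k by simp
    qed
  next
    assume H: "\<forall>k<15. c!(tau!k) = tau!(c!k)"
    show "\<forall>eta\<in>G'_ex. \<forall>mu\<in>D_ex. \<forall>A\<in>tabloids mu. \<forall>B.
      lift (nth c) (orbit_tab G_ex A) = orbit_tab G_ex B \<longrightarrow>
      lift (nth c) (orbit_tab G_ex (tab_act eta A)) = orbit_tab G_ex (tab_act eta B)"
    proof (intro ballI allI impI)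
      fix eta mu A B
      assume eta: "eta \<in> G'_ex" and mu: "mu \<in> D_ex" and A: "A \<in> tabloids mu"
        and HB: "lift (nth c) (orbit_tab G_ex A) = orbit_tab G_ex B"
      obtain k where k: "k < 15" "orbit_tab G_ex A = ol k" using orbit_in_O[OF mu A] by blast
      have oB: "orbit_tab G_ex B = ol (c!k)" using HB k lift_ol by simp
      have e1: "orbit_tab G_ex (tab_act eta A) = ol (tauE eta k)"
        using E[OF eta k(1), of A] orbit_self[of A] k(2) by simp
      have e2: "orbit_tab G_ex (tab_act eta B) = ol (tauE eta (c!k))"
        using E[OF eta rng[OF k(1)], of B] orbit_self[of B] oB by simp
      have "c ! (tauE eta k) = tauE eta (c!k)"
        using H k by (simp add: tauE_def)
      then show "lift (nth c) (orbit_tab G_ex (tab_act eta A)) = orbit_tab G_ex (tab_act eta B)"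
        using e1 e2 lift_ol tauE_rng k by simp
    qed
  qed
qed

lemma image_filter: "(\<And>c. c \<in> S \<Longrightarrow> P (F c) = Q c) \<Longrightarrow> {al \<in> F ` S. P al} = F ` {c \<in> S. Q c}"
  by auto

lemma CANDS2_eq: "set CANDS2 = {c \<in> set CANDS. \<forall>k\<in>set [0..<15]. c!(tau!k) = tau!(c!k)}"
  unfolding CANDS2_def CANDS_def tau_def by code_simp

lemma AutG'_char: "Aut0G'_set G_ex G'_ex D_ex = (\<lambda>c. lift (nth c)) ` set CANDS2"
proof -
  have "Aut0G'_set G_ex G'_ex D_ex = {al \<in> (\<lambda>c. lift (nth c)) ` set CANDS. \<forall>eta\<in>G'_ex. \<forall>mu\<in>D_ex. \<forall>A\<in>tabloids mu. \<forall>B.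
      al (orbit_tab G_ex A) = orbit_tab G_ex B \<longrightarrow>
      al (orbit_tab G_ex (tab_act eta A)) = orbit_tab G_ex (tab_act eta B)}"
    unfolding Aut0G'_set_def Aut0_char by simp
  also have "\<dots> = (\<lambda>c. lift (nth c)) ` {c \<in> set CANDS. \<forall>k<15. c!(tau!k) = tau!(c!k)}"
    by (rule image_filter, rule cond_iff, assumption)
  also have "{c \<in> set CANDS. \<forall>k<15. c!(tau!k) = tau!(c!k)} = set CANDS2"
    unfolding CANDS2_eq by auto
  finally show ?thesis .
qed




definition Af :: "nat \<Rightarrow> nat" where "Af k = (if k = 1 then 2 else if k = 2 then 4 else 5)"
definition Bf :: "nat \<Rightarrow> nat" where "Bf k = (if k = 1 then 6 else if k = 2 then 9 else 10)"
definition Cf :: "nat \<Rightarrow> nat" where "Cf k = (if k = 1 then 14 else if k = 2 then 12 else 11)"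
definition Df :: "nat \<Rightarrow> nat" where "Df k = (if k = 1 then 7 else 8)"

definition sig :: "(nat \<Rightarrow> nat) \<Rightarrow> (nat \<Rightarrow> nat) \<Rightarrow> nat \<Rightarrow> nat" where
  "sig p q i = (if i = 2 then Af (p 1) else if i = 4 then Af (p 2) else if i = 5 then Af (p 3)
     else if i = 6 then Bf (p 1) else if i = 9 then Bf (p 2) else if i = 10 then Bf (p 3)
     else if i = 14 then Cf (p 1) else if i = 12 then Cf (p 2) else if i = 11 then Cf (p 3)
     else if i = 7 then Df (q 1) else if i = 8 then Df (q 2) else i)"

lemma sig_vals:
  "sig p q 0 = 0" "sig p q 1 = 1" "sig p q 2 = Af (p 1)" "sig p q 3 = 3" "sig p q 4 = Af (p 2)"
  "sig p q 5 = Af (p 3)" "sig p q 6 = Bf (p 1)" "sig p q 7 = Df (q 1)" "sig p q 8 = Df (q 2)"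
  "sig p q 9 = Bf (p 2)" "sig p q 10 = Bf (p 3)" "sig p q 11 = Cf (p 3)" "sig p q 12 = Cf (p 2)"
  "sig p q 13 = 13" "sig p q 14 = Cf (p 1)"
  by (simp_all add: sig_def)

lemma sig_other: "i \<notin> {2,4,5,6,9,10,14,12,11,7,8} \<Longrightarrow> sig p q i = i"
  by (simp add: sig_def)

lemma sigA: "k \<in> {1,2,3} \<Longrightarrow> sig p q (Af k) = Af (p k)"
  by (auto simp: Af_def sig_vals)
lemma sigB: "k \<in> {1,2,3} \<Longrightarrow> sig p q (Bf k) = Bf (p k)"
  by (auto simp: Bf_def sig_vals)
lemma sigC: "k \<in> {1,2,3} \<Longrightarrow> sig p q (Cf k) = Cf (p k)"
  by (auto simp: Cf_def sig_vals)
lemma sigD: "k \<in> {1,2} \<Longrightarrow> sig p q (Df k) = Df (q k)"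
  by (auto simp: Df_def sig_vals)

lemma Af_inj: "a \<in> {1,2,3} \<Longrightarrow> b \<in> {1,2,3} \<Longrightarrow> Af a = Af b \<Longrightarrow> a = b"
  by (auto simp: Af_def)
lemma Df_inj: "a \<in> {1,2} \<Longrightarrow> b \<in> {1,2} \<Longrightarrow> Df a = Df b \<Longrightarrow> a = b"
  by (auto simp: Df_def)

lemma sig_comp:
  assumes "p' 1 \<in> {1,2,3}" "p' 2 \<in> {1,2,3}" "p' 3 \<in> {1,2,3}" "q' 1 \<in> {1,2}" "q' 2 \<in> {1,2}"
    "P 1 = p (p' 1)" "P 2 = p (p' 2)" "P 3 = p (p' 3)" "Q 1 = q (q' 1)" "Q 2 = q (q' 2)"
  shows "sig P Q i = sig p q (sig p' q' i)"
proof (cases "i \<in> {2,4,5,6,9,10,14,12,11,7,8}")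
  case True
  then show ?thesis
    apply (elim insertE emptyE)
    using assms by (simp_all only: sig_vals sigA sigB sigC sigD)
next
  case False
  then show ?thesis by (simp add: sig_other)
qed

lemma sig_rng: "i < 15 \<Longrightarrow> sig p q i < 15"
  by (simp add: sig_def Af_def Bf_def Cf_def Df_def)

lemma idx_rng: "x \<in> ol ` {..<15} \<Longrightarrow> idx x < 15"
  unfolding idx_def by (metis inv_into_into lessThan_iff)

lemma lift_cong: "(\<And>i. i < 15 \<Longrightarrow> \<sigma> i = \<sigma>' i) \<Longrightarrow> lift \<sigma> = lift \<sigma>'"
  by (rule ext) (simp add: lift_def idx_rng)

lemma lift_comp: "(\<And>i. i < 15 \<Longrightarrow> \<sigma>' i < 15) \<Longrightarrow> lift \<sigma> \<circ> lift \<sigma>' = lift (\<sigma> \<circ> \<sigma>')"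
proof (rule ext)
  fix x assume r: "\<And>i. i < 15 \<Longrightarrow> \<sigma>' i < 15"
  show "(lift \<sigma> \<circ> lift \<sigma>') x = lift (\<sigma> \<circ> \<sigma>') x"
  proof (cases "x \<in> ol ` {..<15}")
    case True
    then obtain i where "i < 15" "x = ol i" by auto
    then show ?thesis using r lift_ol by simp
  next
    case False
    then show ?thesis using lift_out by simp
  qed
qed

lemma lift_map: "lift (nth (map \<sigma> [0..<15])) = lift \<sigma>"
  by (rule lift_cong) simp

lemma lift_inj_CANDS:
  assumes "c \<in> set CANDS" "c' \<in> set CANDS" "lift (nth c) = lift (nth c')"
  shows "c = c'"
proof -
  have f: "length c = 15 \<and> distinct c \<and> (\<forall>i\<in>set c. i < 15)" using CANDS_facts(1) assms(1) by blast
  have f': "length c' = 15 \<and> distinct c' \<and> (\<forall>i\<in>set c'. i < 15)" using CANDS_facts(1) assms(2) by blast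
  show ?thesis
  proof (rule nth_equalityI)
    show "length c = length c'" using f f' by simp
    fix i assume "i < length c"
    then have i: "i < 15" using f by simp
    have "ol (c!i) = ol (c'!i)" using assms(3) lift_ol[OF i, of "nth c"] lift_ol[OF i, of "nth c'"] by simp
    moreover have "c!i < 15" "c'!i < 15" using f f' i nth_mem[of i c] nth_mem[of i c'] by auto
    ultimately show "c!i = c'!i" using ol_eq_iff by simp
  qed
qed

lemma card_lift_image: "set L \<subseteq> set CANDS \<Longrightarrow> distinct L \<Longrightarrow> card ((\<lambda>c. lift (nth c)) ` set L) = length L"
proof -
  assume "set L \<subseteq> set CANDS" "distinct L"
  moreover have "inj_on (\<lambda>c. lift (nth c)) (set L)"
    using lift_inj_CANDS \<open>set L \<subseteq> set CANDS\<close> by (auto intro: inj_onI)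
  ultimately show ?thesis by (simp add: card_image distinct_card)
qed

lemma CANDS_misc: "distinct CANDS" "length CANDS = 12" "distinct CANDS2" "length CANDS2 = 4" "set CANDS2 \<subseteq> set CANDS"
  unfolding CANDS_def CANDS2_def by code_simp+

lemma card_Aut0: "card (Aut0_set G_ex D_ex) = 12"
  unfolding Aut0_char using card_lift_image[of CANDS] CANDS_misc by simp

lemma card_AutG': "card (Aut0G'_set G_ex G'_ex D_ex) = 4"
  unfolding AutG'_char using card_lift_image[of CANDS2] CANDS_misc by simp

lemma finite_Aut0: "finite (Aut0_set G_ex D_ex)" unfolding Aut0_char by simp
lemma finite_AutG': "finite (Aut0G'_set G_ex G'_ex D_ex)" unfolding AutG'_char by simp

lemma iso_lemma:
  assumes grp: "group G" and fin: "finite X"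
    and mem: "\<And>x. x \<in> carrier G \<Longrightarrow> f x \<in> X"
    and inj: "inj_on f (carrier G)"
    and crd: "card (carrier G) = card X"
    and hom: "\<And>x y. x \<in> carrier G \<Longrightarrow> y \<in> carrier G \<Longrightarrow> f (x \<otimes>\<^bsub>G\<^esub> y) = f x \<circ> f y"
  shows "fun_group X \<cong> G"
proof -
  have sub: "f ` carrier G \<subseteq> X" using mem by auto
  have "card (f ` carrier G) = card X" using inj crd by (simp add: card_image)
  then have img: "f ` carrier G = X" using card_subset_eq[OF fin sub] by simp
  have "f \<in> iso G (fun_group X)"
  proof (rule isoI)
    show "f \<in> hom G (fun_group X)"
      unfolding hom_def fun_group_def using mem hom by auto
    show "bij_betw f (carrier G) (carrier (fun_group X))"
      unfolding bij_betw_def fun_group_def using inj img by simp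
  qed
  then have "G \<cong> fun_group X" by (rule is_isoI)
  then show ?thesis by (rule group.iso_sym[OF grp])
qed

lemma in13: "(x::nat) \<in> {1..3} \<Longrightarrow> x \<in> {1,2,3}"
  by simp presburger
lemma in12: "(x::nat) \<in> {1..2} \<Longrightarrow> x \<in> {1,2}"
  by simp presburger

lemma perm3: "(p::nat\<Rightarrow>nat) permutes {1..3} \<Longrightarrow> p 1 \<in> {1,2,3} \<and> p 2 \<in> {1,2,3} \<and> p 3 \<in> {1,2,3} \<and> p 1 \<noteq> p 2 \<and> p 1 \<noteq> p 3 \<and> p 2 \<noteq> p 3"
proof -
  assume p: "p permutes {1..3}"
  have "p 1 \<in> {1..3}" "p 2 \<in> {1..3}" "p 3 \<in> {1..3}" using permutes_in_image[OF p] by auto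
  then have "p 1 \<in> {1,2,3}" "p 2 \<in> {1,2,3}" "p 3 \<in> {1,2,3}" using in13 by blast+
  moreover have "p 1 \<noteq> p 2" "p 1 \<noteq> p 3" "p 2 \<noteq> p 3" using inj_eq[OF permutes_inj[OF p]] by simp_all
  ultimately show ?thesis by blast
qed

lemma perm2: "(p::nat\<Rightarrow>nat) permutes {1..2} \<Longrightarrow> p 1 \<in> {1,2} \<and> p 2 \<in> {1,2} \<and> p 1 \<noteq> p 2"
proof -
  assume p: "p permutes {1..2}"
  have "p 1 \<in> {1..2}" "p 2 \<in> {1..2}" using permutes_in_image[OF p] by auto
  then have "p 1 \<in> {1,2}" "p 2 \<in> {1,2}" using in12 by blast+
  moreover have "p 1 \<noteq> p 2" using inj_eq[OF permutes_inj[OF p]] by simp_all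
  ultimately show ?thesis by blast
qed

lemma perm_eq: "p permutes {1..n} \<Longrightarrow> p' permutes {1..n} \<Longrightarrow> (\<And>k. k \<in> {1..n} \<Longrightarrow> p k = p' k) \<Longrightarrow> p = p'"
  by (rule ext) (metis permutes_not_in)

lemma perm3': assumes "(p::nat\<Rightarrow>nat) permutes {1..3}" shows "(p 1, p 2, p 3) \<in> {(1,2,3),(1,3,2),(2,1,3),(2,3,1),(3,1,2),(3,2,1)}"
  using perm3[OF assms] by (elim conjE insertE emptyE; simp)

lemma perm2': assumes "(p::nat\<Rightarrow>nat) permutes {1..2}" shows "(p 1, p 2) \<in> {(1,2),(2,1)}"
  using perm2[OF assms] by (elim conjE insertE emptyE; simp)

lemma sig_cands:
  assumes "p permutes {1..3}" "q permutes {1..2}"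
  shows "map (sig p q) [0..<15] \<in> set CANDS"
  using perm3'[OF assms(1)] perm2'[OF assms(2)]
  unfolding map15 sig_vals
  by (elim insertE emptyE; simp add: Af_def Bf_def Cf_def Df_def CANDS_def)

theorem part1: "fun_group (Aut0_set G_ex D_ex) \<cong> DirProd (sym_group 3) (sym_group 2)"
proof (rule iso_lemma[where f = "\<lambda>(p,q). lift (sig p q)"])
  show "group (sym_group 3 \<times>\<times> sym_group 2)" by (intro DirProd_group sym_group_is_group)
  show "finite (Aut0_set G_ex D_ex)" by (rule finite_Aut0)
next
  fix x assume "x \<in> carrier (sym_group 3 \<times>\<times> sym_group 2)"
  then obtain p q where x: "x = (p,q)" "p permutes {1..3}" "q permutes {1..2}"
    by (auto simp: sym_group_carrier)
  then have "lift (nth (map (sig p q) [0..<15])) \<in> Aut0_set G_ex D_ex"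
    unfolding Aut0_char using sig_cands by blast
  then show "(\<lambda>(p,q). lift (sig p q)) x \<in> Aut0_set G_ex D_ex" using x lift_map by simp
next
  show "inj_on (\<lambda>(p,q). lift (sig p q)) (carrier (sym_group 3 \<times>\<times> sym_group 2))"
  proof (rule inj_onI, clarify)
    fix p q p' q'
    assume "(p, q) \<in> carrier (sym_group 3 \<times>\<times> sym_group 2)" "(p', q') \<in> carrier (sym_group 3 \<times>\<times> sym_group 2)"
      and eq: "lift (sig p q) = lift (sig p' q')"
    then have pq: "p permutes {1..3}" "q permutes {1..2}" "p' permutes {1..3}" "q' permutes {1..2}"
      by (auto simp: sym_group_carrier)
    have s: "sig p q i = sig p' q' i" if "i < 15" for i
    proof -
      have "ol (sig p q i) = ol (sig p' q' i)" using eq lift_ol[OF that] by metis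
      then show ?thesis using ol_eq_iff sig_rng that by simp
    qed
    have P3: "p 1 \<in> {1,2,3}" "p 2 \<in> {1,2,3}" "p 3 \<in> {1,2,3}" "p' 1 \<in> {1,2,3}" "p' 2 \<in> {1,2,3}" "p' 3 \<in> {1,2,3}"
      "q 1 \<in> {1,2}" "q 2 \<in> {1,2}" "q' 1 \<in> {1,2}" "q' 2 \<in> {1,2}"
      using perm3[OF pq(1)] perm3[OF pq(3)] perm2[OF pq(2)] perm2[OF pq(4)] by auto
    have "p 1 = p' 1" "p 2 = p' 2" "p 3 = p' 3" "q 1 = q' 1" "q 2 = q' 2"
      using s[of 2] s[of 4] s[of 5] s[of 7] s[of 8] Af_inj[OF P3(1,4)] Af_inj[OF P3(2,5)] Af_inj[OF P3(3,6)]
        Df_inj[OF P3(7,9)] Df_inj[OF P3(8,10)]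
      by (simp_all add: sig_vals)
    then have "p = p'" "q = q'"
      using perm_eq[OF pq(1) pq(3)] perm_eq[OF pq(2) pq(4)] by (auto simp: numeral_3_eq_3 numeral_2_eq_2 le_Suc_eq)
    then show "p = p' \<and> q = q'" by simp
  qed
next
  have "card (carrier (sym_group 3 \<times>\<times> sym_group 2)) = fact 3 * fact 2"
    by (simp add: sym_group_def card_cartesian_product card_permutations)
  then show "card (carrier (sym_group 3 \<times>\<times> sym_group 2)) = card (Aut0_set G_ex D_ex)"
    using card_Aut0 by (simp add: fact_numeral)
next
  fix x y assume "x \<in> carrier (sym_group 3 \<times>\<times> sym_group 2)" "y \<in> carrier (sym_group 3 \<times>\<times> sym_group 2)"
  then obtain p q p' q' where xy: "x = (p,q)" "y = (p',q')" "p permutes {1..3}" "q permutes {1..2}"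
    "p' permutes {1..3}" "q' permutes {1..2}"
    by (auto simp: sym_group_carrier)
  have "lift (sig (p \<circ> p') (q \<circ> q')) = lift (sig p q \<circ> sig p' q')"
    by (rule lift_cong) (use perm3[OF xy(5)] perm2[OF xy(6)] in \<open>simp add: sig_comp\<close>)
  also have "\<dots> = lift (sig p q) \<circ> lift (sig p' q')" by (rule lift_comp[symmetric]) (rule sig_rng)
  finally show "(\<lambda>(p,q). lift (sig p q)) (x \<otimes>\<^bsub>sym_group 3 \<times>\<times> sym_group 2\<^esub> y)
      = (\<lambda>(p,q). lift (sig p q)) x \<circ> (\<lambda>(p,q). lift (sig p q)) y"
    using xy by (simp add: sym_group_def)
qed

definition ex2 :: "(nat \<Rightarrow> nat) \<Rightarrow> nat \<Rightarrow> nat" where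
  "ex2 p k = (if k = 2 then Suc (p 1) else if k = 3 then Suc (p 2) else k)"

lemma ex2_vals: "ex2 p 1 = 1" "ex2 p 2 = Suc (p 1)" "ex2 p 3 = Suc (p 2)"
  by (simp_all add: ex2_def)

lemma sig2_cands:
  assumes "p permutes {1..2}" "q permutes {1..2}"
  shows "map (sig (ex2 p) q) [0..<15] \<in> set CANDS2"
  using perm2'[OF assms(1)] perm2'[OF assms(2)]
  unfolding map15 sig_vals ex2_vals
  by (elim insertE emptyE; simp add: Af_def Bf_def Cf_def Df_def CANDS2_def)

theorem part2: "fun_group (Aut0G'_set G_ex G'_ex D_ex) \<cong> DirProd (sym_group 2) (sym_group 2)"
proof (rule iso_lemma[where f = "\<lambda>(p,q). lift (sig (ex2 p) q)"])
  show "group (sym_group 2 \<times>\<times> sym_group 2)" by (intro DirProd_group sym_group_is_group)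
  show "finite (Aut0G'_set G_ex G'_ex D_ex)" by (rule finite_AutG')
next
  fix x assume "x \<in> carrier (sym_group 2 \<times>\<times> sym_group 2)"
  then obtain p q where x: "x = (p,q)" "p permutes {1..2}" "q permutes {1..2}"
    by (auto simp: sym_group_carrier)
  then have "lift (nth (map (sig (ex2 p) q) [0..<15])) \<in> Aut0G'_set G_ex G'_ex D_ex"
    unfolding AutG'_char using sig2_cands by blast
  then show "(\<lambda>(p,q). lift (sig (ex2 p) q)) x \<in> Aut0G'_set G_ex G'_ex D_ex" using x lift_map by simp
next
  show "inj_on (\<lambda>(p,q). lift (sig (ex2 p) q)) (carrier (sym_group 2 \<times>\<times> sym_group 2))"
  proof (rule inj_onI, clarify)
    fix p q p' q'
    assume "(p, q) \<in> carrier (sym_group 2 \<times>\<times> sym_group 2)" "(p', q') \<in> carrier (sym_group 2 \<times>\<times> sym_group 2)"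
      and eq: "lift (sig (ex2 p) q) = lift (sig (ex2 p') q')"
    then have pq: "p permutes {1..2}" "q permutes {1..2}" "p' permutes {1..2}" "q' permutes {1..2}"
      by (auto simp: sym_group_carrier)
    have s: "sig (ex2 p) q i = sig (ex2 p') q' i" if "i < 15" for i
    proof -
      have "ol (sig (ex2 p) q i) = ol (sig (ex2 p') q' i)" using eq lift_ol[OF that] by metis
      then show ?thesis using ol_eq_iff sig_rng that by simp
    qed
    have P2: "p 1 \<in> {1,2}" "p 2 \<in> {1,2}" "p' 1 \<in> {1,2}" "p' 2 \<in> {1,2}"
      "q 1 \<in> {1,2}" "q 2 \<in> {1,2}" "q' 1 \<in> {1,2}" "q' 2 \<in> {1,2}"
      using perm2[OF pq(1)] perm2[OF pq(3)] perm2[OF pq(2)] perm2[OF pq(4)] by auto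
    have E3: "Suc (p 1) \<in> {1,2,3}" "Suc (p 2) \<in> {1,2,3}" "Suc (p' 1) \<in> {1,2,3}" "Suc (p' 2) \<in> {1,2,3}"
      using P2 by auto
    have "Suc (p 1) = Suc (p' 1)" "Suc (p 2) = Suc (p' 2)" "q 1 = q' 1" "q 2 = q' 2"
      using s[of 4] s[of 5] s[of 7] s[of 8] Af_inj[OF E3(1,3)] Af_inj[OF E3(2,4)]
        Df_inj[OF P2(5,7)] Df_inj[OF P2(6,8)]
      by (simp_all add: sig_vals ex2_vals)
    then have "p = p'" "q = q'"
      using perm_eq[OF pq(1) pq(3)] perm_eq[OF pq(2) pq(4)] by (auto simp: numeral_2_eq_2 le_Suc_eq)
    then show "p = p' \<and> q = q'" by simp
  qed
next
  have "card (carrier (sym_group 2 \<times>\<times> sym_group 2)) = fact 2 * fact 2"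
    by (simp add: sym_group_def card_cartesian_product card_permutations)
  then show "card (carrier (sym_group 2 \<times>\<times> sym_group 2)) = card (Aut0G'_set G_ex G'_ex D_ex)"
    using card_AutG' by (simp add: fact_numeral)
next
  fix x y assume "x \<in> carrier (sym_group 2 \<times>\<times> sym_group 2)" "y \<in> carrier (sym_group 2 \<times>\<times> sym_group 2)"
  then obtain p q p' q' where xy: "x = (p,q)" "y = (p',q')" "p permutes {1..2}" "q permutes {1..2}"
    "p' permutes {1..2}" "q' permutes {1..2}"
    by (auto simp: sym_group_carrier)
  have P2: "p' 1 \<in> {1,2}" "p' 2 \<in> {1,2}" "q' 1 \<in> {1,2}" "q' 2 \<in> {1,2}"
    using perm2[OF xy(5)] perm2[OF xy(6)] by auto
  have X: "ex2 (p \<circ> p') k = ex2 p (ex2 p' k)" if "k \<in> {1,2,3}" for k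
    using that P2(1,2) by (auto simp: ex2_def)
  have Y: "ex2 p' 1 \<in> {1,2,3}" "ex2 p' 2 \<in> {1,2,3}" "ex2 p' 3 \<in> {1,2,3}"
    using P2 by (auto simp: ex2_def)
  have Z: "ex2 (p \<circ> p') 1 = ex2 p (ex2 p' 1)" "ex2 (p \<circ> p') 2 = ex2 p (ex2 p' 2)" "ex2 (p \<circ> p') 3 = ex2 p (ex2 p' 3)"
    by (rule X; simp)+
  have "lift (sig (ex2 (p \<circ> p')) (q \<circ> q')) = lift (sig (ex2 p) q \<circ> sig (ex2 p') q')"
  proof (rule lift_cong)
    fix i :: nat
    have "sig (ex2 (p \<circ> p')) (q \<circ> q') i = sig (ex2 p) q (sig (ex2 p') q' i)"
      by (rule sig_comp[OF Y P2(3,4) Z]) simp_all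
    then show "sig (ex2 (p \<circ> p')) (q \<circ> q') i = (sig (ex2 p) q \<circ> sig (ex2 p') q') i"
      by simp
  qed
  also have "\<dots> = lift (sig (ex2 p) q) \<circ> lift (sig (ex2 p') q')" by (rule lift_comp[symmetric]) (rule sig_rng)
  finally show "(\<lambda>(p,q). lift (sig (ex2 p) q)) (x \<otimes>\<^bsub>sym_group 2 \<times>\<times> sym_group 2\<^esub> y)
      = (\<lambda>(p,q). lift (sig (ex2 p) q)) x \<circ> (\<lambda>(p,q). lift (sig (ex2 p) q)) y"
    using xy by (simp add: sym_group_def)
qed

theorem theorem10p3p5:
  shows "fun_group (Aut0_set G_ex D_ex) \<cong> DirProd (sym_group 3) (sym_group 2)
       \<and> fun_group (Aut0G'_set G_ex G'_ex D_ex) \<cong> DirProd (sym_group 2) (sym_group 2)"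
  using part1 part2 by blast


end
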